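(* Let $\mathbf{S}=\mathbf{V}\boldsymbol{\Lambda}\mathbf{V}^{\mathsf{H}}$ and $\mathbf{E}=\mathbf{U}\mathbf{M}\mathbf{U}^{\mathsf{H}}$ be $N\times N$ matrices, with $\mathbf{V}=[\mathbf{v}_1,\dots,\mathbf{v}_N]$ and $\mathbf{U}$ unitary, $\boldsymbol{\Lambda}$ diagonal and $\mathbf{M}=\mathrm{diag}(m_1,\dots,m_N)$ diagonal, such that $\|\mathbf{E}\|\le\varepsilon$. Then there is a matrix $\mathbf{E}_U$ with $\|\mathbf{E}_U\|\le\varepsilon\delta$, where $\delta=(\|\mathbf{U}-\mathbf{V}\|+1)^2-1$, such that for every eigenvector $\mathbf{v}_i$ of $\mathbf{S}$, $$\mathbf{E}\mathbf{v}_i=m_i\mathbf{v}_i+\mathbf{E}_U\mathbf{v}_i.$$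
   Context: $\|\cdot\|$ denotes the spectral (operator) norm. *)

theory Defs
  imports "HOL-Analysis.Analysis"
begin

definition adjoint_mat :: "complex^'n^'m \<Rightarrow> complex^'m^'n" where
  "adjoint_mat A = (\<chi> i j. cnj (A $ j $ i))"

definition unitary_mat :: "complex^'n^'n \<Rightarrow> bool" where
  "unitary_mat U \<longleftrightarrow> U ** adjoint_mat U = mat 1 \<and> adjoint_mat U ** U = mat 1"

definition diagonal_mat :: "complex^'n^'n \<Rightarrow> bool" where
  "diagonal_mat A \<longleftrightarrow> (\<forall>i j. i \<noteq> j \<longrightarrow> A $ i $ j = 0)"

definition spec_norm :: "complex^'n^'m \<Rightarrow> real" where
  "spec_norm A = onorm (\<lambda>x. A *v x)"

end

theory Submission imports Defs begin

lemma inner_cnj: "inner (z::complex) w = Re (cnj z * w)"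
  by (simp add: inner_complex_def)

lemma inner_adj:
  fixes A :: "complex^'n^'m"
  shows "inner (A *v x) y = inner x (adjoint_mat A *v y)"
proof -
  have "inner (A *v x) y = Re (\<Sum>i\<in>UNIV. \<Sum>j\<in>UNIV. cnj (A$i$j) * cnj (x$j) * y$i)"
    by (simp add: inner_vec_def matrix_vector_mult_def inner_cnj Re_sum sum_distrib_right)
  also have "\<dots> = Re (\<Sum>j\<in>UNIV. \<Sum>i\<in>UNIV. cnj (A$i$j) * cnj (x$j) * y$i)"
    by (subst sum.swap) rule
  also have "\<dots> = inner x (adjoint_mat A *v y)"
    by (simp add: inner_vec_def matrix_vector_mult_def inner_cnj Re_sum sum_distrib_left adjoint_mat_def mult_ac)
  finally show ?thesis .
qed

lemma bl: "bounded_linear (\<lambda>x. (A::complex^'n^'m) *v x)"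
  by simp

lemma sn_nonneg: "0 \<le> spec_norm A"
  unfolding spec_norm_def by (rule onorm_pos_le) simp

lemma sn_bound: "norm (A *v x) \<le> spec_norm A * norm x"
  unfolding spec_norm_def by (rule onorm) simp

lemma sn_le: "0 \<le> b \<Longrightarrow> (\<And>x. norm (A *v x) \<le> b * norm x) \<Longrightarrow> spec_norm (A::complex^'n^'m) \<le> b"
  unfolding spec_norm_def by (rule onorm_bound)

lemma sn_mult: "spec_norm ((A::complex^'n^'m) ** (B::complex^'k^'n)) \<le> spec_norm A * spec_norm B"
proof (rule sn_le)
  show "0 \<le> spec_norm A * spec_norm B" by (simp add: sn_nonneg)
  fix x
  have "norm ((A ** B) *v x) = norm (A *v (B *v x))" by (simp add: matrix_vector_mul_assoc)
  also have "\<dots> \<le> spec_norm A * norm (B *v x)" by (rule sn_bound)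
  also have "\<dots> \<le> spec_norm A * (spec_norm B * norm x)"
    by (rule mult_left_mono[OF sn_bound sn_nonneg])
  finally show "norm ((A ** B) *v x) \<le> spec_norm A * spec_norm B * norm x" by (simp add: mult_ac)
qed

lemma sn_add: "spec_norm ((A::complex^'n^'m) + B) \<le> spec_norm A + spec_norm B"
proof (rule sn_le)
  show "0 \<le> spec_norm A + spec_norm B" by (simp add: sn_nonneg)
  fix x
  have "norm ((A + B) *v x) = norm (A *v x + B *v x)" by (simp add: matrix_vector_mult_add_rdistrib)
  also have "\<dots> \<le> norm (A *v x) + norm (B *v x)" by (rule norm_triangle_ineq)
  also have "\<dots> \<le> (spec_norm A + spec_norm B) * norm x"
    using sn_bound[of A x] sn_bound[of B x] by (simp add: distrib_right)
  finally show "norm ((A + B) *v x) \<le> (spec_norm A + spec_norm B) * norm x" .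
qed

lemma adj_adj: "adjoint_mat (adjoint_mat A) = A"
  by (simp add: adjoint_mat_def vec_eq_iff)

lemma sn_adj: "spec_norm (adjoint_mat (A::complex^'n^'m)) \<le> spec_norm A"
proof (rule sn_le)
  show "0 \<le> spec_norm A" by (simp add: sn_nonneg)
  fix x
  let ?y = "adjoint_mat A *v x"
  have "(norm ?y)\<^sup>2 = inner ?y ?y" by (simp add: dot_square_norm)
  also have "\<dots> = inner (A *v ?y) x" by (simp add: inner_adj adj_adj)
  also have "\<dots> \<le> norm (A *v ?y) * norm x" by (rule norm_cauchy_schwarz)
  also have "\<dots> \<le> spec_norm A * norm ?y * norm x"
    by (rule mult_right_mono[OF sn_bound]) simp
  finally have h: "(norm ?y)\<^sup>2 \<le> spec_norm A * norm ?y * norm x" .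
  show "norm ?y \<le> spec_norm A * norm x"
  proof (cases "norm ?y = 0")
    case True then show ?thesis by (simp add: sn_nonneg)
  next
    case False
    then have "0 < norm ?y" by simp
    with h show ?thesis by (simp add: power2_eq_square mult_ac)
  qed
qed

lemma unitary_sn:
  assumes "adjoint_mat U ** U = mat 1"
  shows "spec_norm (U::complex^'n^'n) \<le> 1"
proof (rule sn_le)
  fix x
  have "(norm (U *v x))\<^sup>2 = inner (U *v x) (U *v x)" by (simp add: dot_square_norm)
  also have "\<dots> = inner x x" by (simp add: inner_adj matrix_vector_mul_assoc assms)
  finally show "norm (U *v x) \<le> 1 * norm x" by (simp add: dot_square_norm)
qed simp

lemma adj_diff: "adjoint_mat (A - B) = adjoint_mat A - adjoint_mat (B::complex^'n^'m)"
  by (simp add: adjoint_mat_def vec_eq_iff)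

lemma adj_add: "adjoint_mat (A + B) = adjoint_mat A + adjoint_mat (B::complex^'n^'m)"
  by (simp add: adjoint_mat_def vec_eq_iff)

lemma matrix_add_rdistrib': "((A::complex^'n^'m) + B) ** (C::complex^'k^'n) = A ** C + B ** C"
  by (vector matrix_matrix_mult_def sum.distrib[symmetric] field_simps)

lemma col_eq: "A *v column i B = column i (A ** B)"
  by (simp add: column_def matrix_matrix_mult_def matrix_vector_mult_def vec_eq_iff)

lemma diag_col: "diagonal_mat M \<Longrightarrow> M *v column i (mat 1) = (M $ i $ i) *s column i (mat 1)"
  unfolding diagonal_mat_def column_def matrix_vector_mult_def mat_def
  by (auto simp: vec_eq_iff if_distrib cong: if_cong)

lemma col_smult: "(A::complex^'n^'m) *v (c *s x) = c *s (A *v x)"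
  by (simp add: matrix_vector_mult_def vec_eq_iff sum_distrib_left mult_ac)

theorem lemma1:
  fixes S E V U \<Lambda> M :: "complex^'n^'n" and \<epsilon> :: real
  assumes "S = V ** \<Lambda> ** adjoint_mat V"
    and "E = U ** M ** adjoint_mat U"
    and "unitary_mat V" and "unitary_mat U"
    and "diagonal_mat \<Lambda>" and "diagonal_mat M"
    and "spec_norm E \<le> \<epsilon>"
  shows "\<exists>E\<^sub>U :: complex^'n^'n.
           spec_norm E\<^sub>U \<le> \<epsilon> * ((spec_norm (U - V) + 1)\<^sup>2 - 1) \<and>
           (\<forall>i. E *v column i V = (M $ i $ i) *s column i V + E\<^sub>U *v column i V)"
proof -
  define D where "D = U - V"
  define EU where "EU = E - V ** M ** adjoint_mat V"
  have uU: "U ** adjoint_mat U = mat 1" "adjoint_mat U ** U = mat 1"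
    and uV: "V ** adjoint_mat V = mat 1" "adjoint_mat V ** V = mat 1"
    using assms(3,4) by (auto simp: unitary_mat_def)
  have nV: "spec_norm V \<le> 1" by (rule unitary_sn[OF uV(2)])
  have nVa: "spec_norm (adjoint_mat V) \<le> 1" by (rule unitary_sn) (simp add: adj_adj uV(1))
  have nU: "spec_norm U \<le> 1" by (rule unitary_sn[OF uU(2)])
  have nUa: "spec_norm (adjoint_mat U) \<le> 1" by (rule unitary_sn) (simp add: adj_adj uU(1))
  have Meq: "M = adjoint_mat U ** E ** U"
  proof -
    have "adjoint_mat U ** E ** U = (adjoint_mat U ** U) ** M ** (adjoint_mat U ** U)"
      unfolding assms(2) by (simp add: matrix_mul_assoc)
    then show ?thesis using uU by simp
  qed
  have nM: "spec_norm M \<le> \<epsilon>"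
  proof -
    have "spec_norm M \<le> spec_norm (adjoint_mat U ** E) * spec_norm U"
      unfolding Meq by (rule sn_mult)
    also have "\<dots> \<le> spec_norm (adjoint_mat U ** E)"
      using nU sn_nonneg[of "adjoint_mat U ** E"] by (simp add: mult_left_le)
    also have "\<dots> \<le> spec_norm (adjoint_mat U) * spec_norm E" by (rule sn_mult)
    also have "\<dots> \<le> spec_norm E"
      using nUa sn_nonneg[of E] by (simp add: mult_left_le_one_le mult.commute mult_left_le)
    finally show ?thesis using assms(7) by simp
  qed
  have e0: "0 \<le> \<epsilon>" using nM sn_nonneg[of M] by simp
  have d0: "0 \<le> spec_norm D" by (rule sn_nonneg)
  have nDa: "spec_norm (adjoint_mat D) \<le> spec_norm D" by (rule sn_adj)
  have Ueq: "U = V + D" by (simp add: D_def)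
  have EUeq: "EU = D ** M ** adjoint_mat V + V ** M ** adjoint_mat D + D ** M ** adjoint_mat D"
    unfolding EU_def assms(2) Ueq
    by (simp add: adj_add matrix_add_ldistrib matrix_add_rdistrib')
  have bound: "spec_norm EU \<le> \<epsilon> * ((spec_norm D + 1)\<^sup>2 - 1)"
  proof -
    have t1: "spec_norm (D ** M ** adjoint_mat V) \<le> spec_norm D * \<epsilon>"
    proof -
      have "spec_norm (D ** M ** adjoint_mat V) \<le> spec_norm (D ** M) * spec_norm (adjoint_mat V)"
        by (rule sn_mult)
      also have "\<dots> \<le> spec_norm (D ** M)"
        using nVa sn_nonneg[of "D ** M"] by (simp add: mult_left_le)
      also have "\<dots> \<le> spec_norm D * spec_norm M" by (rule sn_mult)
      also have "\<dots> \<le> spec_norm D * \<epsilon>" by (rule mult_left_mono[OF nM d0])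
      finally show ?thesis .
    qed
    have t2: "spec_norm (V ** M ** adjoint_mat D) \<le> spec_norm D * \<epsilon>"
    proof -
      have "spec_norm (V ** M ** adjoint_mat D) \<le> spec_norm (V ** M) * spec_norm (adjoint_mat D)"
        by (rule sn_mult)
      also have "\<dots> \<le> spec_norm (V ** M) * spec_norm D"
        by (rule mult_left_mono[OF nDa sn_nonneg])
      also have "\<dots> \<le> spec_norm V * spec_norm M * spec_norm D"
        by (rule mult_right_mono[OF sn_mult d0])
      also have "\<dots> \<le> 1 * \<epsilon> * spec_norm D"
        by (intro mult_right_mono mult_mono nV nM d0 sn_nonneg) simp
      finally show ?thesis by (simp add: mult.commute)
    qed
    have t3: "spec_norm (D ** M ** adjoint_mat D) \<le> spec_norm D * \<epsilon> * spec_norm D"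
    proof -
      have "spec_norm (D ** M ** adjoint_mat D) \<le> spec_norm (D ** M) * spec_norm (adjoint_mat D)"
        by (rule sn_mult)
      also have "\<dots> \<le> spec_norm (D ** M) * spec_norm D"
        by (rule mult_left_mono[OF nDa sn_nonneg])
      also have "\<dots> \<le> spec_norm D * spec_norm M * spec_norm D"
        by (rule mult_right_mono[OF sn_mult d0])
      also have "\<dots> \<le> spec_norm D * \<epsilon> * spec_norm D"
        by (intro mult_right_mono mult_left_mono nM d0)
      finally show ?thesis .
    qed
    have "spec_norm EU \<le> spec_norm (D ** M ** adjoint_mat V + V ** M ** adjoint_mat D)
        + spec_norm (D ** M ** adjoint_mat D)" unfolding EUeq by (rule sn_add)
    also have "\<dots> \<le> spec_norm (D ** M ** adjoint_mat V) + spec_norm (V ** M ** adjoint_mat D)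
        + spec_norm (D ** M ** adjoint_mat D)" using sn_add by simp
    also have "\<dots> \<le> \<epsilon> * ((spec_norm D + 1)\<^sup>2 - 1)"
      using t1 t2 t3 by (simp add: power2_eq_square algebra_simps)
    finally show ?thesis .
  qed
  have cols: "E *v column i V = (M $ i $ i) *s column i V + EU *v column i V" for i
  proof -
    have "(V ** M ** adjoint_mat V) *v column i V = V *v (M *v (adjoint_mat V *v column i V))"
      by (simp add: matrix_vector_mul_assoc matrix_mul_assoc)
    also have "\<dots> = V *v (M *v column i (mat 1))" by (simp add: col_eq uV)
    also have "\<dots> = (M $ i $ i) *s column i V"
      using diag_col[OF assms(6)] by (simp add: col_smult col_eq)
    finally have "(V ** M ** adjoint_mat V) *v column i V = (M $ i $ i) *s column i V" .
    moreover have "E = V ** M ** adjoint_mat V + EU" by (simp add: EU_def)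
    ultimately show ?thesis by (simp add: matrix_vector_mult_add_rdistrib)
  qed
  show ?thesis using bound cols unfolding D_def by blast
qed
end
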